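(* Let $n\in\mathbb{N}$, $H\in\mathbb{R}^{n\times n}$, $W\in\mathbb{R}^{n\times n}$ with $W\succ 0$, let $C=\mathrm{diag}(C_{11},\dots,C_{nn})$ be diagonal with all $C_{ii}\neq 0$, and let $V=\mathrm{diag}(\sigma_1^2,\dots,\sigma_n^2)$ with all $\sigma_i>0$. Assume $(H,C)$ is observable and $(H,D)$ is controllable, where $W=DD^T$. Let $\Sigma$ be the unique positive semidefinite solution of $$\Sigma = H\Sigma H^T - H\Sigma C^T(C\Sigma C^T+V)^{-1}C\Sigma H^T + W ,$$ and let $\overline{\Sigma}:=(C^TV^{-1}C+\Sigma^{-1})^{-1}$. Then $$\frac{n\,\sigma_u^2}{C_u^2+\sigma_u^2\,\lambda_n(W)^{-1}}\;\le\;\mathrm{tr}\,\overline{\Sigma}\;\le\; n\,\frac{\sigma_l^2}{C_l^2}.$$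
   Context: This models a linear system $x(k+1)=Hx(k)+w(k)$, $w(k)\sim\mathcal N(0,W)$, whose outputs $Cx(k)$ are privatized by adding Gaussian noise $v(k)\sim\mathcal N(0,V)$ before being processed by a steady-state Kalman filter; $\Sigma$ is the steady-state a priori error covariance and $\overline\Sigma$ the steady-state a posteriori error covariance (its trace is the steady-state mean squared estimation error). For a symmetric matrix $K$, $\lambda_n(K)\le\dots\le\lambda_1(K)$ denote its eigenvalues. Indices: $l:=\arg\min_{1\le i\le n} C_{ii}^2/\sigma_i^2$ and $u:=\arg\max_{1\le i\le n} C_{ii}^2/\sigma_i^2$; $C_l:=C_{ll}$, $C_u:=C_{uu}$, and $\sigma_l,\sigma_u$ are the corresponding $\sigma_i$. *)

theory Defs
  imports "HOL-Analysis.Analysis"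
begin

primrec matpow :: "real^'n^'n \<Rightarrow> nat \<Rightarrow> real^'n^'n" where
  "matpow A 0 = mat 1"
| "matpow A (Suc k) = A ** matpow A k"

definition diag_mat :: "('n \<Rightarrow> real) \<Rightarrow> real^'n^'n" where
  "diag_mat d = (\<chi> i j. if i = j then d i else 0)"

definition symmetric_mat :: "real^'n^'n \<Rightarrow> bool" where
  "symmetric_mat A \<longleftrightarrow> transpose A = A"

definition pos_def :: "real^'n^'n \<Rightarrow> bool" where
  "pos_def A \<longleftrightarrow> symmetric_mat A \<and> (\<forall>x. x \<noteq> 0 \<longrightarrow> x \<bullet> (A *v x) > 0)"

definition pos_semidef :: "real^'n^'n \<Rightarrow> bool" where
  "pos_semidef A \<longleftrightarrow> symmetric_mat A \<and> (\<forall>x. x \<bullet> (A *v x) \<ge> 0)"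

definition mat_eigenvalue :: "real^'n^'n \<Rightarrow> real \<Rightarrow> bool" where
  "mat_eigenvalue A \<mu> \<longleftrightarrow> (\<exists>v. v \<noteq> 0 \<and> A *v v = \<mu> *\<^sub>R v)"

definition lambda_min :: "real^'n^'n \<Rightarrow> real" where
  "lambda_min A = Min {\<mu>. mat_eigenvalue A \<mu>}"

text \<open>Observability of (H,C): the observability matrix [C; CH; ...; CH^(n-1)]
  has full column rank n, i.e. its kernel is trivial.\<close>
definition observable :: "real^'n^'n \<Rightarrow> real^'n^'p \<Rightarrow> bool" where
  "observable H C \<longleftrightarrow>
     (\<forall>x. (\<forall>k<CARD('n). C *v (matpow H k *v x) = 0) \<longrightarrow> x = 0)"

text \<open>Controllability of (H,D): the controllability matrix [D, HD, ..., H^(n-1) D]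
  has full row rank n, i.e. its columns span R^n.\<close>
definition controllable :: "real^'n^'n \<Rightarrow> real^'m^'n \<Rightarrow> bool" where
  "controllable H D \<longleftrightarrow>
     span (\<Union>k<CARD('n). range (\<lambda>u. matpow H k *v (D *v u))) = UNIV"

end

theory Submission imports Defs begin


lemma inv_mat: "invertible (A::real^'n^'n) \<Longrightarrow> A ** matrix_inv A = mat 1 \<and> matrix_inv A ** A = mat 1"
  unfolding invertible_def matrix_inv_def by (rule someI_ex)

lemma dot_transpose: "(x::real^'m) \<bullet> ((A::real^'n^'m) *v y) = (transpose A *v x) \<bullet> y"
  by (simp add: dot_lmul_matrix)

lemma sym_dot: "transpose A = A \<Longrightarrow> (x::real^'n) \<bullet> ((A::real^'n^'n) *v y) = y \<bullet> (A *v x)"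
  by (metis dot_transpose inner_commute)

lemma pd_invertible:
  assumes "\<forall>x. x \<noteq> 0 \<longrightarrow> x \<bullet> ((A::real^'n^'n) *v x) > 0"
  shows "invertible A"
proof -
  have "\<forall>x. A *v x = 0 \<longrightarrow> x = 0" using assms by force
  then show ?thesis using invertible_left_inverse matrix_left_invertible_ker by blast
qed

lemma var_ineq:
  fixes N Ni :: "real^'n^'n"
  assumes sym: "transpose N = N" and inv: "N ** Ni = mat 1" and psd: "\<forall>x. 0 \<le> x \<bullet> (N *v x)"
  shows "2*(x \<bullet> y) - x \<bullet> (N *v x) \<le> y \<bullet> (Ni *v y)"
proof -
  define w where "w = Ni *v y"
  have Nw: "N *v w = y" unfolding w_def by (simp add: matrix_vector_mul_assoc inv)
  have "0 \<le> (x - w) \<bullet> (N *v (x - w))" using psd by blast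
  also have "\<dots> = x \<bullet> (N *v x) - x \<bullet> (N *v w) - w \<bullet> (N *v x) + w \<bullet> (N *v w)"
    by (simp add: matrix_vector_mult_diff_distrib inner_diff_left inner_diff_right)
  also have "w \<bullet> (N *v x) = x \<bullet> y" using sym_dot[OF sym, of w x] Nw by simp
  finally show ?thesis using Nw unfolding w_def by (simp add: inner_commute)
qed

lemma antitone:
  fixes N Ni M Mi :: "real^'n^'n"
  assumes sym: "transpose N = N" and inv: "N ** Ni = mat 1" and psd: "\<forall>x. 0 \<le> x \<bullet> (N *v x)"
    and invM: "M ** Mi = mat 1" and le: "\<forall>x. x \<bullet> (N *v x) \<le> x \<bullet> (M *v x)"
  shows "y \<bullet> (Mi *v y) \<le> y \<bullet> (Ni *v y)"
proof -
  define x where "x = Mi *v y"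
  have Mx: "M *v x = y" unfolding x_def by (simp add: matrix_vector_mul_assoc invM)
  have "2*(x \<bullet> y) - x \<bullet> (N *v x) \<le> y \<bullet> (Ni *v y)" by (rule var_ineq[OF sym inv psd])
  moreover have "x \<bullet> (N *v x) \<le> x \<bullet> y" using le Mx by metis
  ultimately show ?thesis unfolding x_def by (simp add: inner_commute)
qed

lemma ifz_mult[simp]: "(if P then (a::real) else 0) * b = (if P then a*b else 0)"
  "b * (if P then (a::real) else 0) = (if P then b*a else 0)" by auto

lemma diag_mv: "diag_mat d *v x = (\<chi> i. d i * x$i)"
  by (simp add: diag_mat_def matrix_vector_mult_def vec_eq_iff sum.delta sum.delta')

lemma diag_mult: "diag_mat d ** diag_mat e = diag_mat (\<lambda>i. d i * e i)"
  by (simp add: diag_mat_def matrix_matrix_mult_def vec_eq_iff sum.delta sum.delta')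

lemma diag_transpose: "transpose (diag_mat d) = diag_mat d"
  by (simp add: diag_mat_def transpose_def vec_eq_iff)

lemma diag_quad: "x \<bullet> (diag_mat d *v x) = (\<Sum>i\<in>UNIV. d i * (x$i)^2)"
  by (simp add: diag_mv inner_vec_def power2_eq_square algebra_simps)

lemma mat_diag: "mat k = diag_mat (\<lambda>_. k)"
  by (simp add: diag_mat_def mat_def)

lemma diag_inv:
  assumes "\<forall>i. d i \<noteq> 0"
  shows "matrix_inv (diag_mat d) = diag_mat (\<lambda>i. inverse (d i))"
proof -
  let ?B = "diag_mat (\<lambda>i. inverse (d i))"
  have 1: "diag_mat d ** ?B = mat 1" "?B ** diag_mat d = mat 1"
    using assms by (simp_all add: diag_mult mat_diag)
  then have "invertible (diag_mat d)" unfolding invertible_def by blast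
  from inv_mat[OF this] have "matrix_inv (diag_mat d) ** diag_mat d = mat 1" by simp
  then have "matrix_inv (diag_mat d) ** (diag_mat d ** ?B) = ?B"
    by (simp add: matrix_mul_assoc)
  then show ?thesis using 1 by simp
qed

lemma trace_quad: "trace (A::real^'n^'n) = (\<Sum>i\<in>UNIV. axis i 1 \<bullet> (A *v axis i 1))"
  by (simp add: trace_def inner_vec_def matrix_vector_mult_def axis_def sum.delta sum.delta')



lemma psd_zero_kernel_aux:
  fixes a b :: real
  assumes "a \<ge> 0" and "\<forall>t. 0 \<le> 2*t*b + t^2*a"
  shows "b = 0"
proof (rule ccontr)
  assume "b \<noteq> 0"
  define t where "t = - b/(a+1)"
  have h: "0 \<le> 2*t*b + t^2*a" using assms by blast
  have a1: "a + 1 \<noteq> 0" using assms(1) by simp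
  have ht: "(a+1)*t = -b" using a1 by (simp add: t_def)
  have "(a+1)^2 * (2*t*b + t^2*a) = 2*b*(a+1)*((a+1)*t) + ((a+1)*t)^2*a"
    by (simp add: power2_eq_square algebra_simps)
  also have "\<dots> = - (b^2*(a+2))" unfolding ht by (simp add: power2_eq_square algebra_simps)
  finally have "(a+1)^2 * (2*t*b + t^2*a) = - (b^2*(a+2))" .
  moreover have "0 \<le> (a+1)^2 * (2*t*b + t^2*a)" using h by simp
  moreover have "b^2*(a+2) > 0" using \<open>b \<noteq> 0\<close> assms(1) by simp
  ultimately show False by linarith
qed

lemma lambda_min_prop:
  fixes W :: "real^'n^'n"
  assumes pd: "pos_def W"
  shows "0 < lambda_min W \<and> (\<forall>x. lambda_min W * (x \<bullet> x) \<le> x \<bullet> (W *v x))"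
proof -
  have sym: "transpose W = W" using pd unfolding pos_def_def symmetric_mat_def by auto
  have pos: "\<And>x. x \<noteq> 0 \<Longrightarrow> x \<bullet> (W *v x) > 0" using pd unfolding pos_def_def by auto
  define E where "E = {\<mu>. mat_eigenvalue W \<mu>}"
  define f where "f \<mu> = (SOME v. v \<noteq> 0 \<and> W *v v = \<mu> *\<^sub>R v)" for \<mu>
  have fE: "f \<mu> \<noteq> 0 \<and> W *v f \<mu> = \<mu> *\<^sub>R f \<mu>" if "\<mu> \<in> E" for \<mu>
    unfolding f_def by (rule someI_ex) (use that in \<open>simp add: E_def mat_eigenvalue_def\<close>)
  have inj: "inj_on f E"
  proof (rule inj_onI)
    fix \<mu> \<nu> assume "\<mu> \<in> E" "\<nu> \<in> E" "f \<mu> = f \<nu>"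
    then have "\<mu> *\<^sub>R f \<mu> = \<nu> *\<^sub>R f \<mu>" "f \<mu> \<noteq> 0" using fE by metis+
    then show "\<mu> = \<nu>" by simp
  qed
  have orth: "pairwise orthogonal (f ` E)"
  proof (clarsimp simp: pairwise_def)
    fix \<mu> \<nu> assume m: "\<mu> \<in> E" and n: "\<nu> \<in> E" and ne: "f \<mu> \<noteq> f \<nu>"
    then have "\<mu> \<noteq> \<nu>" by auto
    have "f \<nu> \<bullet> (W *v f \<mu>) = f \<mu> \<bullet> (W *v f \<nu>)" by (rule sym_dot[OF sym])
    then have "\<mu> * (f \<mu> \<bullet> f \<nu>) = \<nu> * (f \<mu> \<bullet> f \<nu>)"
      using fE[OF m] fE[OF n] by (simp add: inner_commute)
    then show "orthogonal (f \<mu>) (f \<nu>)" using \<open>\<mu> \<noteq> \<nu>\<close> unfolding orthogonal_def by simp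
  qed
  have finE: "finite E"
    using pairwise_orthogonal_imp_finite[OF orth] finite_imageD inj by blast
  define q where "q x = x \<bullet> (W *v x)" for x :: "real^'n"
  have cont: "continuous_on (sphere 0 1) q"
    unfolding q_def by (intro continuous_intros linear_continuous_on) simp
  have "sphere (0::real^'n) 1 \<noteq> {}" by simp
  then obtain x0 where x0: "x0 \<in> sphere 0 1" and x0min: "\<forall>y\<in>sphere 0 1. q x0 \<le> q y"
    using continuous_attains_inf[OF compact_sphere _ cont] by blast
  define \<mu>0 where "\<mu>0 = q x0"
  have qscale: "q (c *\<^sub>R y) = c^2 * q y" for c y
    by (simp add: q_def matrix_vector_mult_scaleR power2_eq_square)
  have bound: "\<mu>0 * (x \<bullet> x) \<le> q x" for x
  proof (cases "x = 0")
    case True then show ?thesis by (simp add: q_def)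
  next
    case False
    define y where "y = (1/norm x) *\<^sub>R x"
    have "y \<in> sphere 0 1" using False by (simp add: y_def)
    then have "\<mu>0 \<le> q y" using x0min \<mu>0_def by blast
    moreover have "x = norm x *\<^sub>R y" using False by (simp add: y_def)
    then have "q x = (norm x)^2 * q y" using qscale by metis
    moreover have "x \<bullet> x = (norm x)^2" by (simp add: power2_norm_eq_inner)
    ultimately show ?thesis by (metis mult.commute mult_right_mono zero_le_power2)
  qed
  have x0x0: "x0 \<bullet> x0 = 1" using x0 by (simp add: power2_norm_eq_inner[symmetric])
  define r where "r = W *v x0 - \<mu>0 *\<^sub>R x0"
  define g where "g x = q x - \<mu>0 * (x \<bullet> x)" for x
  have gnn: "0 \<le> g x" for x using bound by (simp add: g_def)
  have gx0: "g x0 = 0" by (simp add: g_def x0x0 \<mu>0_def)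
  have expand: "g (x0 + t *\<^sub>R r) = 2*t*(r \<bullet> r) + t^2 * g r" for t
  proof -
    have s: "x0 \<bullet> (W *v r) = r \<bullet> (W *v x0)" by (rule sym_dot[OF sym])
    have "g (x0 + t *\<^sub>R r) = g x0 + t * (x0 \<bullet> (W *v r)) + t * (r \<bullet> (W *v x0))
            - 2 * t * \<mu>0 * (x0 \<bullet> r) + t^2 * g r"
      by (simp add: g_def q_def matrix_vector_right_distrib matrix_vector_mult_scaleR
          inner_add_left inner_add_right power2_eq_square algebra_simps inner_commute)
    also have "\<dots> = 2*t*(r \<bullet> r) + t^2 * g r"
      unfolding gx0 s by (simp add: r_def inner_diff_left algebra_simps inner_commute)
    finally show ?thesis .
  qed
  have "r \<bullet> r = 0"
    by (rule psd_zero_kernel_aux[OF gnn[of r]]) (metis expand gnn)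
  then have eig: "W *v x0 = \<mu>0 *\<^sub>R x0" by (simp add: r_def)
  have x0nz: "x0 \<noteq> 0" using x0x0 by auto
  have mu0E: "\<mu>0 \<in> E" unfolding E_def mat_eigenvalue_def using eig x0nz by blast
  have mu0le: "\<mu>0 \<le> \<mu>" if "\<mu> \<in> E" for \<mu>
  proof -
    from that obtain v where v: "v \<noteq> 0" "W *v v = \<mu> *\<^sub>R v" unfolding E_def mat_eigenvalue_def by blast
    have "\<mu>0 * (v \<bullet> v) \<le> \<mu> * (v \<bullet> v)" using bound[of v] v by (simp add: q_def)
    moreover have "v \<bullet> v > 0" using v by simp
    ultimately show ?thesis by simp
  qed
  have lm: "lambda_min W = \<mu>0"
    unfolding lambda_min_def E_def[symmetric]
    using finE mu0E mu0le by (metis Min_eqI)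
  have "\<mu>0 > 0"
  proof -
    have "0 < x0 \<bullet> (W *v x0)" using pos x0nz by blast
    then show ?thesis using eig x0x0 by simp
  qed
  then show ?thesis using lm bound q_def by simp
qed



lemma diag_pd: "(\<forall>i. d i > 0) \<Longrightarrow> x \<noteq> 0 \<Longrightarrow> 0 < x \<bullet> (diag_mat d *v x)"
proof -
  assume d: "\<forall>i. d i > 0" and x: "x \<noteq> 0"
  then obtain i where "x$i \<noteq> 0" by (metis vec_eq_iff zero_index)
  moreover have "\<forall>j. 0 \<le> d j * (x$j)^2" using d by (simp add: less_imp_le)
  ultimately show ?thesis unfolding diag_quad using d
    by (intro sum_pos2[where i=i]) auto
qed

lemma diag_axis: "axis i 1 \<bullet> (diag_mat d *v axis i 1) = d i"
proof -
  have "(\<Sum>j\<in>UNIV. d j * ((axis i (1::real))$j)^2) = (\<Sum>j\<in>UNIV. if j = i then d j else 0)"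
    by (rule sum.cong) (auto simp: axis_def)
  then show ?thesis by (simp add: diag_quad)
qed

lemma inner_self_sum: "(x::real^'n) \<bullet> x = (\<Sum>i\<in>UNIV. (x$i)^2)"
  by (simp add: inner_vec_def power2_eq_square)

lemma transpose_plus: "transpose (A + B) = transpose A + (transpose B :: real^'n^'n)"
  by (simp add: transpose_def vec_eq_iff)

lemma transpose_minus: "transpose (A - B) = transpose A - (transpose B :: real^'n^'n)"
  by (simp add: transpose_def vec_eq_iff)

lemma quad_sandwich: "x \<bullet> ((A ** B ** transpose A) *v x) = (transpose A *v x) \<bullet> (B *v (transpose A *v x))"
  for A :: "real^'n^'m" and B :: "real^'n^'n"
  by (simp add: matrix_vector_mul_assoc[symmetric] dot_transpose)



lemma mat_sub_ldistrib: "(A::real^'n^'m) ** (B - C) = A ** B - A ** (C::real^'k^'n)"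
  by (simp add: matrix_matrix_mult_def vec_eq_iff sum_subtractf algebra_simps)

lemma mat_sub_rdistrib: "((B::real^'n^'m) - C) ** (A::real^'k^'n) = B ** A - C ** A"
  by (simp add: matrix_matrix_mult_def vec_eq_iff sum_subtractf algebra_simps)

theorem theorem2:
  fixes H W \<Sigma> :: "real^'n^'n"
    and D :: "real^'m^'n"
    and c \<sigma> :: "'n \<Rightarrow> real"
    and l u :: 'n
  defines "C \<equiv> diag_mat c"
    and "V \<equiv> diag_mat (\<lambda>i. (\<sigma> i)\<^sup>2)"
  assumes W_pd: "pos_def W"
    and c_nz: "\<forall>i. c i \<noteq> 0"
    and \<sigma>_pos: "\<forall>i. \<sigma> i > 0"
    and W_fact: "W = D ** transpose D"
    and obs: "observable H C"
    and ctrb: "controllable H D"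
    and \<Sigma>_psd: "pos_semidef \<Sigma>"
    and dare: "\<Sigma> = H ** \<Sigma> ** transpose H
                   - H ** \<Sigma> ** transpose C ** matrix_inv (C ** \<Sigma> ** transpose C + V) ** C ** \<Sigma> ** transpose H
                   + W"
    and l_min: "\<forall>i. (c l)\<^sup>2 / (\<sigma> l)\<^sup>2 \<le> (c i)\<^sup>2 / (\<sigma> i)\<^sup>2"
    and u_max: "\<forall>i. (c i)\<^sup>2 / (\<sigma> i)\<^sup>2 \<le> (c u)\<^sup>2 / (\<sigma> u)\<^sup>2"
  shows "real CARD('n) * (\<sigma> u)\<^sup>2 / ((c u)\<^sup>2 + (\<sigma> u)\<^sup>2 * inverse (lambda_min W))
           \<le> trace (matrix_inv (transpose C ** matrix_inv V ** C + matrix_inv \<Sigma>))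
       \<and> trace (matrix_inv (transpose C ** matrix_inv V ** C + matrix_inv \<Sigma>))
           \<le> real CARD('n) * ((\<sigma> l)\<^sup>2 / (c l)\<^sup>2)"
proof -
  have symS: "transpose \<Sigma> = \<Sigma>" and psdS: "\<forall>x. 0 \<le> x \<bullet> (\<Sigma> *v x)"
    using \<Sigma>_psd unfolding pos_semidef_def symmetric_mat_def by auto
  have symC: "transpose C = C" unfolding C_def by (rule diag_transpose)
  have symV: "transpose V = V" unfolding V_def by (rule diag_transpose)
  have Vpd: "\<And>x. x \<noteq> 0 \<Longrightarrow> 0 < x \<bullet> (V *v x)"
  proof -
    have "\<forall>i. 0 < (\<sigma> i)^2" using \<sigma>_pos by (metis zero_less_power2 less_irrefl)
    then show "\<And>x. x \<noteq> 0 \<Longrightarrow> 0 < x \<bullet> (V *v x)" unfolding V_def by (intro diag_pd)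
  qed
  have Vpsd: "0 \<le> x \<bullet> (V *v x)" for x
    using Vpd[of x] by (cases "x = 0") auto
  define S where "S = C ** \<Sigma> ** transpose C + V"
  define Si where "Si = matrix_inv S"
  have Squad: "x \<bullet> (S *v x) = (transpose C *v x) \<bullet> (\<Sigma> *v (transpose C *v x)) + x \<bullet> (V *v x)" for x
    unfolding S_def by (simp add: matrix_vector_mult_add_rdistrib inner_add_right quad_sandwich)
  have "invertible S"
    by (rule pd_invertible) (use Squad psdS Vpd in \<open>smt (verit)\<close>)
  then have SSi: "S ** Si = mat 1" unfolding Si_def using inv_mat by blast
  define P where "P = \<Sigma> - \<Sigma> ** transpose C ** Si ** C ** \<Sigma>"
  have Ppsd: "0 \<le> x \<bullet> (P *v x)" for x
  proof -
    define y where "y = C *v (\<Sigma> *v x)"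
    define z where "z = Si *v y"
    have Sz: "S *v z = y" unfolding z_def by (simp add: matrix_vector_mul_assoc SSi)
    have Px: "x \<bullet> (P *v x) = x \<bullet> (\<Sigma> *v x) - y \<bullet> z"
    proof -
      have "x \<bullet> ((\<Sigma> ** transpose C ** Si ** C ** \<Sigma>) *v x)
            = x \<bullet> (\<Sigma> *v (transpose C *v z))"
        by (simp add: y_def z_def matrix_vector_mul_assoc matrix_mul_assoc)
      also have "\<dots> = y \<bullet> z"
        using dot_transpose[of x \<Sigma>] dot_transpose[of "\<Sigma> *v x" "transpose C" z] symS
        by (simp add: y_def inner_commute del: transpose_matrix_vector)
      finally show ?thesis
        by (simp add: P_def matrix_vector_mult_diff_rdistrib inner_diff_right)
    qed
    let ?w = "x - transpose C *v z"
    have e0: "0 \<le> ?w \<bullet> (\<Sigma> *v ?w) + z \<bullet> (V *v z)" using psdS Vpsd by (simp add: add_nonneg_nonneg)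
    have e1: "?w \<bullet> (\<Sigma> *v ?w) = x \<bullet> (\<Sigma> *v x) - x \<bullet> (\<Sigma> *v (transpose C *v z))
        - (transpose C *v z) \<bullet> (\<Sigma> *v x) + (transpose C *v z) \<bullet> (\<Sigma> *v (transpose C *v z))"
      by (simp add: matrix_vector_mult_diff_distrib inner_diff_left inner_diff_right del: transpose_matrix_vector)
    have e2: "x \<bullet> (\<Sigma> *v (transpose C *v z)) = y \<bullet> z"
      using dot_transpose[of x \<Sigma>] dot_transpose[of "\<Sigma> *v x" "transpose C" z] symS
      by (simp add: y_def inner_commute del: transpose_matrix_vector)
    have e3: "(transpose C *v z) \<bullet> (\<Sigma> *v x) = y \<bullet> z"
      using dot_transpose[of "\<Sigma> *v x" "transpose C" z]
      by (simp add: y_def inner_commute del: transpose_matrix_vector)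
    have e4: "(transpose C *v z) \<bullet> (\<Sigma> *v (transpose C *v z)) + z \<bullet> (V *v z) = z \<bullet> y"
      using Squad[of z] Sz by (simp del: transpose_matrix_vector)
    have "0 \<le> x \<bullet> (\<Sigma> *v x) - y \<bullet> z" using e0 e1 e2 e3 e4 by (simp add: inner_commute)
    then show ?thesis using Px by simp
  qed
  have dare2: "\<Sigma> = H ** P ** transpose H + W"
  proof -
    have "H ** P ** transpose H = H ** \<Sigma> ** transpose H
          - H ** \<Sigma> ** transpose C ** Si ** C ** \<Sigma> ** transpose H"
      by (simp add: P_def matrix_mul_assoc mat_sub_ldistrib mat_sub_rdistrib)
    then show ?thesis using dare unfolding S_def[symmetric] Si_def[symmetric] by simp
  qed
  have SgeW: "x \<bullet> (W *v x) \<le> x \<bullet> (\<Sigma> *v x)" for x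
  proof -
    have "x \<bullet> (\<Sigma> *v x) = x \<bullet> ((H ** P ** transpose H) *v x) + x \<bullet> (W *v x)"
      by (subst dare2) (simp add: matrix_vector_mult_add_rdistrib inner_add_right)
    moreover have "0 \<le> x \<bullet> ((H ** P ** transpose H) *v x)"
      by (simp add: quad_sandwich Ppsd)
    ultimately show ?thesis by simp
  qed
  define lam where "lam = lambda_min W"
  have lam_pos: "0 < lam" and lamW: "\<forall>x. lam * (x \<bullet> x) \<le> x \<bullet> (W *v x)"
    using lambda_min_prop[OF W_pd] unfolding lam_def by auto
  have Spd: "0 < x \<bullet> (\<Sigma> *v x)" if "x \<noteq> 0" for x
  proof -
    have "0 < lam * (x \<bullet> x)" using lam_pos that by simp
    then show ?thesis using lamW SgeW[of x] by (meson less_le_trans order_trans)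
  qed
  define Ti where "Ti = matrix_inv \<Sigma>"
  have "invertible \<Sigma>" using Spd pd_invertible by blast
  then have STi: "\<Sigma> ** Ti = mat 1" and TiS: "Ti ** \<Sigma> = mat 1" unfolding Ti_def using inv_mat by blast+
  have symTi: "transpose Ti = Ti"
  proof -
    have "transpose (Ti ** \<Sigma>) = mat 1" using TiS by simp
    then have "\<Sigma> ** transpose Ti = mat 1" by (simp add: matrix_transpose_mul symS)
    then have "Ti ** (\<Sigma> ** transpose Ti) = Ti" by simp
    then have "(Ti ** \<Sigma>) ** transpose Ti = Ti" by (simp only: matrix_mul_assoc)
    then show ?thesis by (simp only: TiS matrix_mul_lid)
  qed
  have Tipsd: "0 \<le> x \<bullet> (Ti *v x)" for x
  proof -
    define w where "w = Ti *v x"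
    have "\<Sigma> *v w = x" unfolding w_def by (simp add: matrix_vector_mul_assoc STi)
    then have "x \<bullet> (Ti *v x) = w \<bullet> (\<Sigma> *v w)" unfolding w_def by (metis inner_commute)
    then show ?thesis using psdS by simp
  qed
  have Tile: "x \<bullet> (Ti *v x) \<le> inverse lam * (x \<bullet> x)" for x
  proof -
    have "x \<bullet> (Ti *v x) \<le> x \<bullet> (diag_mat (\<lambda>_. inverse lam) *v x)"
    proof (rule antitone[where N="diag_mat (\<lambda>_. lam)" and M=\<Sigma>])
      show "transpose (diag_mat (\<lambda>_. lam)) = diag_mat (\<lambda>_. lam)" by (rule diag_transpose)
      show "diag_mat (\<lambda>_. lam) ** diag_mat (\<lambda>_. inverse lam) = mat 1"
        using lam_pos by (simp add: diag_mult mat_diag)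
      show "\<forall>x. 0 \<le> x \<bullet> (diag_mat (\<lambda>_. lam) *v x)"
        using lam_pos by (simp add: diag_quad sum_nonneg)
      show "\<Sigma> ** Ti = mat 1" by (rule STi)
      show "\<forall>x. x \<bullet> (diag_mat (\<lambda>_. lam) *v x) \<le> x \<bullet> (\<Sigma> *v x)"
      proof
        fix x :: "real^'n"
        have "x \<bullet> (diag_mat (\<lambda>_. lam) *v x) = lam * (x \<bullet> x)"
          by (simp add: diag_quad inner_self_sum sum_distrib_left)
        then show "x \<bullet> (diag_mat (\<lambda>_. lam) *v x) \<le> x \<bullet> (\<Sigma> *v x)"
          using lamW SgeW[of x] by (metis order_trans)
      qed
    qed
    then show ?thesis by (simp add: diag_quad inner_self_sum sum_distrib_left)
  qed
  define a where "a i = (c i)^2 / (\<sigma> i)^2" for i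
  have a_pos: "0 < a i" for i
  proof -
    have "0 < (c i)^2" using c_nz by simp
    moreover have "0 < (\<sigma> i)^2" using \<sigma>_pos by (metis zero_less_power2 less_irrefl)
    ultimately show ?thesis by (simp add: a_def)
  qed
  have Vinv: "matrix_inv V = diag_mat (\<lambda>i. inverse ((\<sigma> i)^2))"
    unfolding V_def using \<sigma>_pos by (intro diag_inv) (metis power_not_zero less_irrefl)
  have A: "transpose C ** matrix_inv V ** C = diag_mat a"
    unfolding Vinv symC unfolding C_def diag_mult
    by (rule arg_cong[where f=diag_mat]) (simp add: a_def fun_eq_iff power2_eq_square field_simps)
  define M where "M = diag_mat a + Ti"
  define Mi where "Mi = matrix_inv M"
  have Mquad: "x \<bullet> (M *v x) = x \<bullet> (diag_mat a *v x) + x \<bullet> (Ti *v x)" for x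
    unfolding M_def by (simp add: matrix_vector_mult_add_rdistrib inner_add_right)
  have "invertible M"
  proof (rule pd_invertible, intro allI impI)
    fix x :: "real^'n" assume "x \<noteq> 0"
    then have "0 < x \<bullet> (diag_mat a *v x)" using a_pos by (intro diag_pd) auto
    then show "0 < x \<bullet> (M *v x)" using Mquad Tipsd by (smt (verit))
  qed
  then have MMi: "M ** Mi = mat 1" and MiM: "Mi ** M = mat 1" unfolding Mi_def using inv_mat by blast+
  have symM: "transpose M = M" unfolding M_def by (simp add: transpose_plus diag_transpose symTi)
  have Mpsd: "\<forall>x. 0 \<le> x \<bullet> (M *v x)"
    using Mquad Tipsd a_pos by (simp add: diag_quad sum_nonneg less_imp_le)
  have goal_eq: "matrix_inv (transpose C ** matrix_inv V ** C + matrix_inv \<Sigma>) = Mi"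
    unfolding Mi_def M_def A Ti_def ..
  have up_i: "axis i 1 \<bullet> (Mi *v axis i 1) \<le> inverse (a i)" for i
  proof -
    have "axis i 1 \<bullet> (Mi *v axis i 1) \<le> axis i 1 \<bullet> (diag_mat (\<lambda>i. inverse (a i)) *v axis i 1)"
    proof (rule antitone[where N="diag_mat a" and M=M])
      show "transpose (diag_mat a) = diag_mat a" by (rule diag_transpose)
      show "diag_mat a ** diag_mat (\<lambda>i. inverse (a i)) = mat 1"
        using a_pos by (simp add: diag_mult mat_diag less_imp_neq[symmetric])
      show "\<forall>x. 0 \<le> x \<bullet> (diag_mat a *v x)"
        using a_pos by (simp add: diag_quad sum_nonneg less_imp_le)
      show "M ** Mi = mat 1" by (rule MMi)
      show "\<forall>x. x \<bullet> (diag_mat a *v x) \<le> x \<bullet> (M *v x)"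
        using Mquad Tipsd by simp
    qed
    then show ?thesis by (simp add: diag_axis)
  qed
  have inv_a_le: "inverse (a i) \<le> (\<sigma> l)\<^sup>2 / (c l)\<^sup>2" for i
  proof -
    have "a l \<le> a i" using l_min by (simp add: a_def)
    then have "inverse (a i) \<le> inverse (a l)" using a_pos by (simp add: le_imp_inverse_le)
    also have "inverse (a l) = (\<sigma> l)\<^sup>2 / (c l)\<^sup>2" by (simp add: a_def)
    finally show ?thesis .
  qed
  have upper: "trace Mi \<le> real CARD('n) * ((\<sigma> l)\<^sup>2 / (c l)\<^sup>2)"
  proof -
    have "trace Mi \<le> (\<Sum>i\<in>(UNIV::'n set). (\<sigma> l)\<^sup>2 / (c l)\<^sup>2)"
      unfolding trace_quad by (intro sum_mono) (metis up_i inv_a_le order_trans)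
    then show ?thesis by simp
  qed
  define k where "k = a u + inverse lam"
  have k_pos: "0 < k" using a_pos[of u] lam_pos unfolding k_def
    by (metis add_pos_pos positive_imp_inverse_positive)
  have low_i: "inverse k \<le> axis i 1 \<bullet> (Mi *v axis i 1)" for i
  proof -
    have "axis i 1 \<bullet> (diag_mat (\<lambda>_. inverse k) *v axis i 1) \<le> axis i 1 \<bullet> (Mi *v axis i 1)"
    proof (rule antitone[where N=M and M="diag_mat (\<lambda>_. k)"])
      show "transpose M = M" by (rule symM)
      show "M ** Mi = mat 1" by (rule MMi)
      show "\<forall>x. 0 \<le> x \<bullet> (M *v x)" by (rule Mpsd)
      show "diag_mat (\<lambda>_. k) ** diag_mat (\<lambda>_. inverse k) = mat 1"
        using k_pos by (simp add: diag_mult mat_diag)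
      show "\<forall>x. x \<bullet> (M *v x) \<le> x \<bullet> (diag_mat (\<lambda>_. k) *v x)"
      proof
        fix x :: "real^'n"
        have au: "a i \<le> a u" for i using u_max by (simp add: a_def)
        have "x \<bullet> (diag_mat a *v x) \<le> (\<Sum>i\<in>UNIV. a u * (x$i)^2)"
          unfolding diag_quad by (intro sum_mono) (simp add: au mult_right_mono)
        moreover have "x \<bullet> (Ti *v x) \<le> (\<Sum>i\<in>UNIV. inverse lam * (x$i)^2)"
          using Tile[of x] by (simp add: inner_self_sum sum_distrib_left)
        ultimately have "x \<bullet> (M *v x) \<le> (\<Sum>i\<in>UNIV. a u * (x$i)^2) + (\<Sum>i\<in>UNIV. inverse lam * (x$i)^2)"
          using Mquad by simp
        also have "\<dots> = x \<bullet> (diag_mat (\<lambda>_. k) *v x)"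
          by (simp add: diag_quad k_def sum.distrib[symmetric] algebra_simps)
        finally show "x \<bullet> (M *v x) \<le> x \<bullet> (diag_mat (\<lambda>_. k) *v x)" .
      qed
    qed
    then show ?thesis by (simp add: diag_axis)
  qed
  have lower: "real CARD('n) * inverse k \<le> trace Mi"
  proof -
    have "(\<Sum>i\<in>(UNIV::'n set). inverse k) \<le> trace Mi"
      unfolding trace_quad by (intro sum_mono low_i)
    then show ?thesis by simp
  qed
  have keq: "real CARD('n) * (\<sigma> u)\<^sup>2 / ((c u)\<^sup>2 + (\<sigma> u)\<^sup>2 * inverse (lambda_min W))
        = real CARD('n) * inverse k"
    using \<sigma>_pos[rule_format, of u]
    by (simp add: k_def a_def lam_def[symmetric] field_simps)
  show ?thesis unfolding goal_eq keq using lower upper by simp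
qed

end
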